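(* The nilpotent Lie algebra $\mathfrak{h}_5\oplus\mathbb{R}^3$ admits weak HKT structures and does not admit any SKT structure. The Lie algebras $\mathfrak{h}_3^{\mathbb{C}}\oplus\mathbb{R}^2$ and $\mathfrak{h}_7^Q\oplus\mathbb{R}$ admit SKT structures and weak HKT structures.
   Context: $\mathfrak{h}_5$ is the $5$-dimensional Heisenberg Lie algebra (basis $e_1,\dots,e_5$ with dual basis satisfying $de^i=0$ for $i\le4$, $de^5=e^{12}+e^{34}$); $\mathfrak{h}_3^{\mathbb{C}}$ is the complex $3$-dimensional Heisenberg Lie algebra regarded as a real $6$-dimensional Lie algebra; $\mathfrak{h}_7^Q$ is the $7$-dimensional quaternionic Heisenberg Lie algebra (with $3$-dimensional center), given by $de^i=0$ for $i\le4$, $de^5=e^{12}+e^{34}$, $de^6=e^{13}-e^{24}$, $de^7=e^{14}+e^{23}$. An SKT structure on a Lie algebra is a complex structure $J$ together with a $J$-compatible inner product $g$ whose fundamental form $\omega=g(J\cdot,\cdot)$ satisfies $\partial\bar\partial\omega=0$. An HKT structure is a hypercomplex structure $(J_1,J_2,J_3)$ (complex structures with $J_1J_2=-J_2J_1=J_3$) with an inner product $g$ compatible with each $J_l$ such that $J_1d\omega_1=J_2d\omega_2=J_3d\omega_3$, where $\omega_l=g(J_l\cdot,\cdot)$; it is weak if the torsion $3$-form of the common Bismut connection is not closed. *)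

theory Defs
  imports Complex_Main
begin

text \<open>
Concrete real Lie algebras of dimension n with basis e_1,...,e_n (indices 1..n).
Vectors are coordinate functions nat => 'a (real vectors, or complexified
vectors when 'a = complex) vanishing outside {1..n}.  A Lie algebra is given,
as in the paper, by the differentials of the dual 1-forms:
de k i j = (d e^k)(e_i, e_j), antisymmetric in i j.  With the Chevalley-Eilenberg
convention (d alpha)(x,y) = - alpha([x,y]) the bracket is
[e_i, e_j] = - sum_k de k i j e_k.
\<close>

definition inV :: "nat \<Rightarrow> (nat \<Rightarrow> 'a::zero) \<Rightarrow> bool" where
  "inV n x \<longleftrightarrow> (\<forall>i. i \<notin> {1..n} \<longrightarrow> x i = 0)"

definition matv :: "nat \<Rightarrow> (nat \<Rightarrow> nat \<Rightarrow> real) \<Rightarrow> (nat \<Rightarrow> 'a::real_field) \<Rightarrow> nat \<Rightarrow> 'a" where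
  "matv n A x = (\<lambda>i. if i \<in> {1..n} then (\<Sum>j=1..n. of_real (A i j) * x j) else 0)"

definition lbr :: "nat \<Rightarrow> (nat \<Rightarrow> nat \<Rightarrow> nat \<Rightarrow> real) \<Rightarrow> (nat \<Rightarrow> 'a::real_field) \<Rightarrow> (nat \<Rightarrow> 'a) \<Rightarrow> nat \<Rightarrow> 'a" where
  "lbr n de x y = (\<lambda>k. if k \<in> {1..n}
      then - (\<Sum>i=1..n. \<Sum>j=1..n. of_real (de k i j) * x i * y j) else 0)"

definition bil :: "nat \<Rightarrow> (nat \<Rightarrow> nat \<Rightarrow> real) \<Rightarrow> (nat \<Rightarrow> 'a::real_field) \<Rightarrow> (nat \<Rightarrow> 'a) \<Rightarrow> 'a" where
  "bil n g x y = (\<Sum>i=1..n. \<Sum>j=1..n. of_real (g i j) * x i * y j)"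

definition wedge2 :: "nat \<Rightarrow> nat \<Rightarrow> nat \<Rightarrow> nat \<Rightarrow> real" where
  "wedge2 a b i j = (if i = a \<and> j = b then 1 else if i = b \<and> j = a then -1 else 0)"

text \<open>Forms: a k-form is a function on lists of k vectors (multilinear, alternating).\<close>
type_synonym 'a form = "(nat \<Rightarrow> 'a) list \<Rightarrow> 'a"

definition drop2 :: "nat \<Rightarrow> nat \<Rightarrow> 'b list \<Rightarrow> 'b list" where
  "drop2 i j xs = map (\<lambda>l. xs ! l) (filter (\<lambda>l. l \<noteq> i \<and> l \<noteq> j) [0..<length xs])"

definition dform :: "nat \<Rightarrow> (nat \<Rightarrow> nat \<Rightarrow> nat \<Rightarrow> real) \<Rightarrow> 'a::real_field form \<Rightarrow> 'a form" where
  "dform n de \<alpha> xs = (\<Sum>i<length xs. \<Sum>j<length xs.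
      if i < j then (-1) ^ (i + j) * \<alpha> (lbr n de (xs ! i) (xs ! j) # drop2 i j xs) else 0)"

definition Jform :: "nat \<Rightarrow> (nat \<Rightarrow> nat \<Rightarrow> real) \<Rightarrow> 'a::real_field form \<Rightarrow> 'a form" where
  "Jform n J \<alpha> xs = \<alpha> (map (matv n J) xs)"

definition omega :: "nat \<Rightarrow> (nat \<Rightarrow> nat \<Rightarrow> real) \<Rightarrow> (nat \<Rightarrow> nat \<Rightarrow> real) \<Rightarrow> 'a::real_field form" where
  "omega n g J xs = bil n g (matv n J (xs ! 0)) (xs ! 1)"

definition cplx_str :: "nat \<Rightarrow> (nat \<Rightarrow> nat \<Rightarrow> nat \<Rightarrow> real) \<Rightarrow> (nat \<Rightarrow> nat \<Rightarrow> real) \<Rightarrow> bool" where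
  "cplx_str n de J \<longleftrightarrow>
     (\<forall>x :: nat \<Rightarrow> real. inV n x \<longrightarrow> matv n J (matv n J x) = (\<lambda>i. - x i)) \<and>
     (\<forall>x y :: nat \<Rightarrow> real. inV n x \<and> inV n y \<longrightarrow>
        lbr n de (matv n J x) (matv n J y) - matv n J (lbr n de (matv n J x) y)
        - matv n J (lbr n de x (matv n J y)) - lbr n de x y = (\<lambda>_. 0))"

definition compat_metric :: "nat \<Rightarrow> (nat \<Rightarrow> nat \<Rightarrow> real) \<Rightarrow> (nat \<Rightarrow> nat \<Rightarrow> real) \<Rightarrow> bool" where
  "compat_metric n J g \<longleftrightarrow>
     (\<forall>i\<in>{1..n}. \<forall>j\<in>{1..n}. g i j = g j i) \<and>
     (\<forall>x :: nat \<Rightarrow> real. inV n x \<and> x \<noteq> (\<lambda>_. 0) \<longrightarrow> bil n g x x > 0) \<and>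
     (\<forall>x y :: nat \<Rightarrow> real. inV n x \<and> inV n y \<longrightarrow>
        bil n g (matv n J x) (matv n J y) = bil n g x y)"

text \<open>The (r, k-r)-component of a complex k-form is
 obtained by splitting each argument v = P v + Q v and keeping the terms with
 exactly r arguments of type (1,0).\<close>
definition P10 :: "nat \<Rightarrow> (nat \<Rightarrow> nat \<Rightarrow> real) \<Rightarrow> (nat \<Rightarrow> complex) \<Rightarrow> nat \<Rightarrow> complex" where
  "P10 n J v = (\<lambda>i. (v i - \<i> * matv n J v i) / 2)"

definition P01 :: "nat \<Rightarrow> (nat \<Rightarrow> nat \<Rightarrow> real) \<Rightarrow> (nat \<Rightarrow> complex) \<Rightarrow> nat \<Rightarrow> complex" where
  "P01 n J v = (\<lambda>i. (v i + \<i> * matv n J v i) / 2)"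

definition typeproj :: "nat \<Rightarrow> (nat \<Rightarrow> nat \<Rightarrow> real) \<Rightarrow> nat \<Rightarrow> complex form \<Rightarrow> complex form" where
  "typeproj n J r \<alpha> xs =
     (\<Sum>S | S \<subseteq> {..<length xs} \<and> card S = r.
        \<alpha> (map (\<lambda>l. if l \<in> S then P10 n J (xs ! l) else P01 n J (xs ! l)) [0..<length xs]))"

text \<open>For the (1,1)-form omega: dbar omega = pi^{1,2}(d omega) and
 del dbar omega = pi^{2,2}(d (dbar omega)).\<close>
definition dbar_omega :: "nat \<Rightarrow> (nat \<Rightarrow> nat \<Rightarrow> nat \<Rightarrow> real) \<Rightarrow> (nat \<Rightarrow> nat \<Rightarrow> real) \<Rightarrow> (nat \<Rightarrow> nat \<Rightarrow> real) \<Rightarrow> complex form" where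
  "dbar_omega n de J g = typeproj n J 1 (dform n de (omega n g J))"

definition ddbar_omega :: "nat \<Rightarrow> (nat \<Rightarrow> nat \<Rightarrow> nat \<Rightarrow> real) \<Rightarrow> (nat \<Rightarrow> nat \<Rightarrow> real) \<Rightarrow> (nat \<Rightarrow> nat \<Rightarrow> real) \<Rightarrow> complex form" where
  "ddbar_omega n de J g = typeproj n J 2 (dform n de (dbar_omega n de J g))"

definition SKT :: "nat \<Rightarrow> (nat \<Rightarrow> nat \<Rightarrow> nat \<Rightarrow> real) \<Rightarrow> (nat \<Rightarrow> nat \<Rightarrow> real) \<Rightarrow> (nat \<Rightarrow> nat \<Rightarrow> real) \<Rightarrow> bool" where
  "SKT n de J g \<longleftrightarrow> cplx_str n de J \<and> compat_metric n J g \<and>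
     (\<forall>xs. length xs = 4 \<and> (\<forall>x\<in>set xs. inV n x) \<longrightarrow> ddbar_omega n de J g xs = 0)"

definition HKT :: "nat \<Rightarrow> (nat \<Rightarrow> nat \<Rightarrow> nat \<Rightarrow> real) \<Rightarrow> (nat \<Rightarrow> nat \<Rightarrow> real) \<Rightarrow> (nat \<Rightarrow> nat \<Rightarrow> real)
     \<Rightarrow> (nat \<Rightarrow> nat \<Rightarrow> real) \<Rightarrow> (nat \<Rightarrow> nat \<Rightarrow> real) \<Rightarrow> bool" where
  "HKT n de J1 J2 J3 g \<longleftrightarrow>
     cplx_str n de J1 \<and> cplx_str n de J2 \<and> cplx_str n de J3 \<and>
     (\<forall>x :: nat \<Rightarrow> real. inV n x \<longrightarrow>
        matv n J1 (matv n J2 x) = matv n J3 x \<and>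
        matv n J2 (matv n J1 x) = (\<lambda>i. - matv n J3 x i)) \<and>
     compat_metric n J1 g \<and> compat_metric n J2 g \<and> compat_metric n J3 g \<and>
     (\<forall>xs :: (nat \<Rightarrow> real) list. length xs = 3 \<and> (\<forall>x\<in>set xs. inV n x) \<longrightarrow>
        Jform n J1 (dform n de (omega n g J1)) xs = Jform n J2 (dform n de (omega n g J2)) xs \<and>
        Jform n J2 (dform n de (omega n g J2)) xs = Jform n J3 (dform n de (omega n g J3)) xs)"

text \<open>Torsion 3-form of the Bismut connection of (J1,g): H = J1 d omega_1
 (common to the three complex structures in the HKT case).\<close>
definition bismut_torsion :: "nat \<Rightarrow> (nat \<Rightarrow> nat \<Rightarrow> nat \<Rightarrow> real) \<Rightarrow> (nat \<Rightarrow> nat \<Rightarrow> real) \<Rightarrow> (nat \<Rightarrow> nat \<Rightarrow> real) \<Rightarrow> real form" where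
  "bismut_torsion n de J g = Jform n J (dform n de (omega n g J))"

definition weak_HKT :: "nat \<Rightarrow> (nat \<Rightarrow> nat \<Rightarrow> nat \<Rightarrow> real) \<Rightarrow> (nat \<Rightarrow> nat \<Rightarrow> real) \<Rightarrow> (nat \<Rightarrow> nat \<Rightarrow> real)
     \<Rightarrow> (nat \<Rightarrow> nat \<Rightarrow> real) \<Rightarrow> (nat \<Rightarrow> nat \<Rightarrow> real) \<Rightarrow> bool" where
  "weak_HKT n de J1 J2 J3 g \<longleftrightarrow> HKT n de J1 J2 J3 g \<and>
     (\<exists>xs :: (nat \<Rightarrow> real) list. length xs = 4 \<and> (\<forall>x\<in>set xs. inV n x) \<and>
        dform n de (bismut_torsion n de J1 g) xs \<noteq> 0)"

definition de_h5R3 :: "nat \<Rightarrow> nat \<Rightarrow> nat \<Rightarrow> real" where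
  "de_h5R3 k i j = (if k = 5 then wedge2 1 2 i j + wedge2 3 4 i j else 0)"

definition de_h3CR2 :: "nat \<Rightarrow> nat \<Rightarrow> nat \<Rightarrow> real" where
  "de_h3CR2 k i j = (if k = 5 then wedge2 1 3 i j - wedge2 2 4 i j
                     else if k = 6 then wedge2 1 4 i j + wedge2 2 3 i j else 0)"

definition de_h7QR :: "nat \<Rightarrow> nat \<Rightarrow> nat \<Rightarrow> real" where
  "de_h7QR k i j = (if k = 5 then wedge2 1 2 i j + wedge2 3 4 i j
                    else if k = 6 then wedge2 1 3 i j - wedge2 2 4 i j
                    else if k = 7 then wedge2 1 4 i j + wedge2 2 3 i j else 0)"

end

theory Submission
  imports Defs
begin

definition Fk :: "nat \<Rightarrow> (nat \<Rightarrow> nat \<Rightarrow> nat \<Rightarrow> real) \<Rightarrow> nat \<Rightarrow> (nat \<Rightarrow> 'a::real_field) \<Rightarrow> (nat \<Rightarrow> 'a) \<Rightarrow> 'a" where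
 "Fk n de k x y = (\<Sum>i=1..n. \<Sum>j=1..n. of_real (de k i j) * x i * y j)"

definition EE :: "nat \<Rightarrow> nat \<Rightarrow> 'a::zero_neq_one" where "EE l = (\<lambda>i. if i = l then 1 else 0)"

lemma lbr_Fk: "lbr n de x y = (\<lambda>k. if k \<in> {1..n} then - Fk n de k x y else 0)"
  unfolding lbr_def Fk_def by simp

lemma omega_lin1: "omega n g J [v, w] = (\<Sum>l=1..n. v l * omega n g J [EE l, w])"
proof -
  have e: "(\<Sum>m=1..n. of_real (J i m) * EE l m) = (of_real (J i l) :: 'a)" if "l \<in> {1..n}" for i l
    using that by (simp add: EE_def if_distrib cong: if_cong)
  have e2: "(\<Sum>m=Suc 0..n. EE l m * of_real (J i m)) = (of_real (J i l) :: 'a)" if "Suc 0 \<le> l" "l \<le> n" for i l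
    using e[of l i] that by (simp add: mult.commute)
  have "omega n g J [v, w] = (\<Sum>i=1..n. \<Sum>j=1..n. \<Sum>l=1..n. v l * (of_real (g i j) * of_real (J i l) * w j))"
    unfolding omega_def bil_def matv_def
    by (simp add: sum_distrib_left sum_distrib_right mult_ac)
  also have "\<dots> = (\<Sum>i=1..n. \<Sum>l=1..n. \<Sum>j=1..n. v l * (of_real (g i j) * of_real (J i l) * w j))"
    by (rule sum.cong[OF refl], rule sum.swap)
  also have "\<dots> = (\<Sum>l=1..n. \<Sum>i=1..n. \<Sum>j=1..n. v l * (of_real (g i j) * of_real (J i l) * w j))"
    by (rule sum.swap)
  also have "\<dots> = (\<Sum>l=1..n. v l * omega n g J [EE l, w])"
  proof (rule sum.cong[OF refl])
    fix l assume l: "l \<in> {1..n}"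
    have "omega n g J [EE l, w] = (\<Sum>i=1..n. \<Sum>j=1..n. of_real (g i j) * of_real (J i l) * w j)"
      unfolding omega_def bil_def matv_def using l by (simp add: e e2 mult_ac)
    then show "(\<Sum>i=1..n. \<Sum>j=1..n. v l * (of_real (g i j) * of_real (J i l) * w j)) = v l * omega n g J [EE l, w]"
      by (simp add: sum_distrib_left mult_ac)
  qed
  finally show ?thesis .
qed

lemma drop2_3:
  "drop2 0 1 [a,b,c] = [c]" "drop2 0 2 [a,b,c] = [b]" "drop2 1 2 [a,b,c] = [a]"
  by (simp_all add: drop2_def upt_rec)

lemma dform3: "dform n de \<alpha> [a,b,c] = - \<alpha> [lbr n de a b, c] + \<alpha> [lbr n de a c, b] - \<alpha> [lbr n de b c, a]"
  unfolding dform_def by (simp add: lessThan_Suc eval_nat_numeral drop2_def upt_rec)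

lemma dform4: "dform n de \<alpha> [a,b,c,d] =
   - \<alpha> [lbr n de a b, c, d] + \<alpha> [lbr n de a c, b, d] - \<alpha> [lbr n de a d, b, c]
   - \<alpha> [lbr n de b c, a, d] + \<alpha> [lbr n de b d, a, c] - \<alpha> [lbr n de c d, a, b]"
  unfolding dform_def by (simp add: lessThan_Suc eval_nat_numeral drop2_def upt_rec algebra_simps)

definition th :: "nat \<Rightarrow> (nat \<Rightarrow> nat \<Rightarrow> real) \<Rightarrow> (nat \<Rightarrow> nat \<Rightarrow> real) \<Rightarrow> nat \<Rightarrow> (nat \<Rightarrow> 'a::real_field) \<Rightarrow> 'a"
  where "th n g J l w = omega n g J [EE l, w]"

lemma domega: "dform n de (omega n g J) [a,b,c] =
  (\<Sum>l=1..n. Fk n de l a b * th n g J l c - Fk n de l a c * th n g J l b + Fk n de l b c * th n g J l a)"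
proof -
  have h: "omega n g J [lbr n de u v, w] = - (\<Sum>l=1..n. Fk n de l u v * th n g J l w)" for u v w
    by (subst omega_lin1) (simp add: lbr_Fk th_def sum_negf)
  show ?thesis unfolding dform3 h by (simp add: sum.distrib sum_subtractf algebra_simps)
qed

lemma set18: "{1..8::nat} = {1,2,3,4,5,6,7,8}" by auto

definition Fh :: "(nat \<Rightarrow> 'a::real_field) \<Rightarrow> (nat \<Rightarrow> 'a) \<Rightarrow> 'a" where
  "Fh x y = x 1 * y 2 - x 2 * y 1 + x 3 * y 4 - x 4 * y 3"

lemma Fk_h5: "Fk 8 de_h5R3 l x y = (if l = 5 then Fh x y else 0)"
  unfolding Fk_def de_h5R3_def wedge2_def Fh_def set18
  by (simp add: algebra_simps)


lemma sets1_3: "{S. S \<subseteq> {..<3::nat} \<and> card S = 1} = {{0},{1},{2}}"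
proof -
  have "S \<subseteq> {..<3::nat} \<and> card S = 1 \<longleftrightarrow> S = {0} \<or> S = {1} \<or> S = {2}" for S
    by (auto simp: card_1_singleton_iff)
  then show ?thesis by auto
qed

lemma typeproj1_3: "typeproj n J 1 \<alpha> [a,b,c] =
   \<alpha> [P10 n J a, P01 n J b, P01 n J c] + \<alpha> [P01 n J a, P10 n J b, P01 n J c] + \<alpha> [P01 n J a, P01 n J b, P10 n J c]"
proof -
  have L: "length [a,b,c] = 3" by simp
  show ?thesis unfolding typeproj_def L sets1_3 by (simp add: upt_rec)
qed
lemma sets2_4: "{S. S \<subseteq> {..<4::nat} \<and> card S = 2} = {{0,1},{0,2},{0,3},{1,2},{1,3},{2,3}}"
proof (rule set_eqI)
  fix S :: "nat set"
  have f: "S \<in> {{0,1},{0,2},{0,3},{1,2},{1,3},{2,3}}" if a: "S \<subseteq> {..<4::nat}" "card S = 2"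
  proof -
    from a obtain x y where S: "S = {x,y}" "x \<noteq> y" by (auto simp: card_2_iff)
    with a have "x < 4" "y < 4" by auto
    then have "x = 0 \<or> x = 1 \<or> x = 2 \<or> x = 3" "y = 0 \<or> y = 1 \<or> y = 2 \<or> y = 3" by auto
    with S show ?thesis by (elim disjE) (simp_all add: doubleton_eq_iff)
  qed
  have b: "S \<subseteq> {..<4::nat} \<and> card S = 2" if "S \<in> {{0,1},{0,2},{0,3},{1,2},{1,3},{2,3}}"
    using that by auto
  show "S \<in> {S. S \<subseteq> {..<4::nat} \<and> card S = 2} \<longleftrightarrow> S \<in> {{0,1},{0,2},{0,3},{1,2},{1,3},{2,3}}"
    using f b by (metis (mono_tags, lifting) mem_Collect_eq)
qed

lemma typeproj2_4: "typeproj n J 2 \<alpha> [a,b,c,d] =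
   \<alpha> [P10 n J a, P10 n J b, P01 n J c, P01 n J d] + \<alpha> [P10 n J a, P01 n J b, P10 n J c, P01 n J d]
 + \<alpha> [P10 n J a, P01 n J b, P01 n J c, P10 n J d] + \<alpha> [P01 n J a, P10 n J b, P10 n J c, P01 n J d]
 + \<alpha> [P01 n J a, P10 n J b, P01 n J c, P10 n J d] + \<alpha> [P01 n J a, P01 n J b, P10 n J c, P10 n J d]"
proof -
  have L: "length [a,b,c,d] = 4" by simp
  show ?thesis unfolding typeproj_def L sets2_4
    by (simp add: upt_rec doubleton_eq_iff algebra_simps)
qed

definition cpx :: "(nat \<Rightarrow> real) \<Rightarrow> nat \<Rightarrow> complex" where "cpx r = (\<lambda>i. complex_of_real (r i))"

lemma matv_lin: "matv n A (\<lambda>i. a * u i + b * v i) = (\<lambda>i. a * matv n A u i + b * matv n A v i)"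
  by (rule ext) (simp add: matv_def sum.distrib sum_distrib_left algebra_simps)

lemma matv_scale: "matv n A (\<lambda>i. a * u i) = (\<lambda>i. a * matv n A u i)"
  by (rule ext) (simp add: matv_def sum_distrib_left algebra_simps)

lemma matv_cpx: "matv n A (cpx r) = cpx (matv n A r)"
  by (rule ext) (simp add: matv_def cpx_def)

lemma inV_matv: "inV n (matv n A x)" by (simp add: inV_def matv_def)
lemma inV_lbr: "inV n (lbr n de x y)" by (simp add: inV_def lbr_def)
lemma inV_cpx: "inV n r \<Longrightarrow> inV n (cpx r)" by (simp add: inV_def cpx_def)

lemma Fh_cpx: "Fh (\<lambda>k. of_real (a k) + \<i> * of_real (b k)) (\<lambda>k. of_real (c k) + \<i> * of_real (d k)) =
   of_real (Fh a c) - of_real (Fh b d) + \<i> * (of_real (Fh a d) + of_real (Fh b c))"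
  by (simp add: Fh_def algebra_simps)

lemma decomp: "v = (\<lambda>i. cpx (\<lambda>k. Re (v k)) i + \<i> * cpx (\<lambda>k. Im (v k)) i)"
  by (rule ext) (simp add: cpx_def complex_eq_iff)

lemma inV_re: "inV n v \<Longrightarrow> inV n (\<lambda>k. Re (v k))" and inV_im: "inV n v \<Longrightarrow> inV n (\<lambda>k. Im (v k))"
  by (auto simp: inV_def)

lemma lbr_h5: "lbr 8 de_h5R3 x y = (\<lambda>k. if k = 5 then - Fh x y else 0)"
  by (rule ext) (simp add: lbr_Fk Fk_h5)

lemma matv_e: "m \<in> {1..n} \<Longrightarrow> matv n A (\<lambda>k. if k = m then s else 0) = (\<lambda>i. if i \<in> {1..n} then of_real (A i m) * s else 0)"
  by (rule ext) (simp add: matv_def if_distrib cong: if_cong)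

lemma matv_e_real: "m \<in> {1..n} \<Longrightarrow> matv n A (\<lambda>k. if k = m then (s::real) else 0) = (\<lambda>i. if i \<in> {1..n} then A i m * s else 0)"
  by (rule ext) (simp add: matv_def if_distrib cong: if_cong)

lemma sum18: "(\<Sum>j::nat=1..8. f j) = f 1 + f 2 + f 3 + f 4 + f 5 + f 6 + f 7 + (f 8 :: 'a::comm_monoid_add)"
  unfolding set18 by (simp add: add.assoc)

lemma R1:
  fixes x y :: "nat \<Rightarrow> real"
  assumes cs: "cplx_str 8 de_h5R3 J" and x: "inV 8 x" and y: "inV 8 y"
  shows "Fh (matv 8 J x) (matv 8 J y) = Fh x y"
proof -
  let ?a = "matv 8 J x" and ?b = "matv 8 J y"
  define w where "w = Fh ?a y + Fh x ?b"
  from cs x y have N: "lbr 8 de_h5R3 ?a ?b - matv 8 J (lbr 8 de_h5R3 ?a y) - matv 8 J (lbr 8 de_h5R3 x ?b) - lbr 8 de_h5R3 x y = (\<lambda>_. 0)"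
    unfolding cplx_str_def by blast
  have N': "(\<lambda>k. (if k = 5 then - Fh ?a ?b else 0) - (if k \<in> {1..8} then J k 5 * - Fh ?a y else 0)
      - (if k \<in> {1..8} then J k 5 * - Fh x ?b else 0) - (if k = 5 then - Fh x y else 0)) = (\<lambda>_. 0)"
    using N unfolding lbr_h5 by (simp add: matv_e_real fun_diff_def)
  have i5: "- Fh ?a ?b + J 5 5 * w + Fh x y = 0"
    using fun_cong[OF N', of 5] by (simp add: w_def algebra_simps)
  have io: "J i 5 * w = 0" if "i \<in> {1..8}" "i \<noteq> 5" for i
    using fun_cong[OF N', of i] that by (simp add: w_def algebra_simps)
  have w0: "w = 0"
  proof (rule ccontr)
    assume "w \<noteq> 0"
    then have z: "J i 5 = 0" if "i \<in> {1..8}" "i \<noteq> 5" for i using io[OF that] by simp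
    have e5: "inV 8 (\<lambda>k. if k = 5 then (1::real) else 0)" by (simp add: inV_def)
    from cs e5 have "matv 8 J (matv 8 J (\<lambda>k. if k = 5 then (1::real) else 0)) = (\<lambda>i. - (if i = 5 then 1 else 0))"
      unfolding cplx_str_def by blast
    then have A: "matv 8 J (matv 8 J (\<lambda>k. if k = 5 then (1::real) else 0)) 5 = -1" by simp
    have B: "matv 8 J (\<lambda>k. if k = 5 then (1::real) else 0) = (\<lambda>i. if i \<in> {1..8} then J i 5 else 0)"
      using matv_e_real[of 5 8 J 1] by (simp cong: if_cong)
    from A have "matv 8 J (\<lambda>i. if i \<in> {1..8} then J i 5 else 0) 5 = -1" unfolding B .
    then have "(\<Sum>j::nat=1..8. J 5 j * (if j \<in> {1..8} then J j 5 else 0)) = -1"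
      unfolding matv_def by simp
    then have "J 5 5 * J 5 5 = -1"
      unfolding sum18 by (simp add: z)
    moreover have "J 5 5 * J 5 5 \<ge> 0" by simp
    ultimately show False by simp
  qed
  with i5 show ?thesis by simp
qed

lemma matv_ri: "matv n A (\<lambda>i. cpx a i + \<i> * cpx b i) = (\<lambda>i. cpx (matv n A a) i + \<i> * cpx (matv n A b) i)"
  by (rule ext) (simp add: matv_def cpx_def sum.distrib sum_distrib_left algebra_simps)

lemma C0:
  fixes v :: "nat \<Rightarrow> complex"
  assumes cs: "cplx_str n de J" and v: "inV n v"
  shows "matv n J (matv n J v) = (\<lambda>i. - v i)"
proof -
  let ?a = "\<lambda>k. Re (v k)" and ?b = "\<lambda>k. Im (v k)"
  have a: "matv n J (matv n J ?a) = (\<lambda>i. - ?a i)" and b: "matv n J (matv n J ?b) = (\<lambda>i. - ?b i)"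
    using cs inV_re[OF v] inV_im[OF v] unfolding cplx_str_def by blast+
  have "matv n J (matv n J v) = matv n J (matv n J (\<lambda>i. cpx ?a i + \<i> * cpx ?b i))"
    by (subst decomp[of v]) simp
  also have "\<dots> = (\<lambda>i. cpx (\<lambda>i. - ?a i) i + \<i> * cpx (\<lambda>i. - ?b i) i)"
    by (simp add: matv_ri a b)
  also have "\<dots> = (\<lambda>i. - v i)"
    by (rule ext) (simp add: cpx_def complex_eq_iff)
  finally show ?thesis .
qed

lemma Fh_cpx': "Fh (\<lambda>k. cpx a k + \<i> * cpx b k) (\<lambda>k. cpx c k + \<i> * cpx d k) =
   of_real (Fh a c) - of_real (Fh b d) + \<i> * (of_real (Fh a d) + of_real (Fh b c))"
  unfolding cpx_def by (rule Fh_cpx)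

lemma C1:
  fixes v w :: "nat \<Rightarrow> complex"
  assumes cs: "cplx_str 8 de_h5R3 J" and v: "inV 8 v" and w: "inV 8 w"
  shows "Fh (matv 8 J v) (matv 8 J w) = Fh v w"
proof -
  let ?a = "\<lambda>k. Re (v k)" and ?b = "\<lambda>k. Im (v k)"
  let ?c = "\<lambda>k. Re (w k)" and ?d = "\<lambda>k. Im (w k)"
  note r = R1[OF cs] inV_re[OF v] inV_im[OF v] inV_re[OF w] inV_im[OF w]
  have "Fh (matv 8 J v) (matv 8 J w) = Fh (matv 8 J (\<lambda>i. cpx ?a i + \<i> * cpx ?b i)) (matv 8 J (\<lambda>i. cpx ?c i + \<i> * cpx ?d i))"
    by (subst decomp[of v], subst decomp[of w]) simp
  also have "\<dots> = Fh (\<lambda>i. cpx ?a i + \<i> * cpx ?b i) (\<lambda>i. cpx ?c i + \<i> * cpx ?d i)"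
    unfolding matv_ri Fh_cpx' by (simp add: r)
  also have "\<dots> = Fh v w" by (subst (3) decomp[of v], subst (3) decomp[of w]) simp
  finally show ?thesis .
qed

lemma Fh_neg_left: "Fh (\<lambda>i. - u i) w = - Fh u w" by (simp add: Fh_def algebra_simps)
lemma Fh_anti: "Fh u w = - Fh w u" by (simp add: Fh_def algebra_simps)
lemma Fh_scale_left: "Fh (\<lambda>i. s * u i) w = s * Fh u w" by (simp add: Fh_def algebra_simps)
lemma Fh_E5: "Fh (EE 5) w = 0" by (simp add: Fh_def EE_def)

lemma C2:
  fixes c d :: "nat \<Rightarrow> complex"
  assumes cs: "cplx_str 8 de_h5R3 J" and c: "inV 8 c" and d: "inV 8 d"
  shows "Fh (matv 8 J c) d = - Fh c (matv 8 J d)"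
proof -
  have "Fh (matv 8 J c) d = Fh (matv 8 J (matv 8 J c)) (matv 8 J d)"
    using C1[OF cs inV_matv d] by simp
  also have "\<dots> = - Fh c (matv 8 J d)" by (simp add: C0[OF cs c] Fh_neg_left)
  finally show ?thesis .
qed

lemma P10_def': "P10 n J v = (\<lambda>i. (v i - \<i> * matv n J v i) / 2)" by (simp add: P10_def)
lemma P01_def': "P01 n J v = (\<lambda>i. (v i + \<i> * matv n J v i) / 2)" by (simp add: P01_def)

lemma Fh_PP: "Fh (P10 n J c) (P10 n J d) = (Fh c d - \<i> * Fh (matv n J c) d - \<i> * Fh c (matv n J d) - Fh (matv n J c) (matv n J d)) / 4"
  by (simp add: P10_def' Fh_def field_simps)
lemma Fh_QQ: "Fh (P01 n J c) (P01 n J d) = (Fh c d + \<i> * Fh (matv n J c) d + \<i> * Fh c (matv n J d) - Fh (matv n J c) (matv n J d)) / 4"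
  by (simp add: P01_def' Fh_def field_simps)
lemma Fh_PQ: "Fh (P10 n J c) (P01 n J d) = (Fh c d - \<i> * Fh (matv n J c) d + \<i> * Fh c (matv n J d) + Fh (matv n J c) (matv n J d)) / 4"
  by (simp add: P10_def' P01_def' Fh_def field_simps)
lemma Fh_QP: "Fh (P01 n J c) (P10 n J d) = (Fh c d + \<i> * Fh (matv n J c) d - \<i> * Fh c (matv n J d) + Fh (matv n J c) (matv n J d)) / 4"
  by (simp add: P10_def' P01_def' Fh_def field_simps)

lemma inV_P10: "inV n v \<Longrightarrow> inV n (P10 n J v)" by (simp add: inV_def P10_def matv_def)
lemma inV_P01: "inV n v \<Longrightarrow> inV n (P01 n J v)" by (simp add: inV_def P01_def matv_def)

lemma P10_scale: "P10 n J (\<lambda>i. s * u i) = (\<lambda>i. s * P10 n J u i)"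
  by (rule ext) (simp add: P10_def matv_scale algebra_simps)
lemma P01_scale: "P01 n J (\<lambda>i. s * u i) = (\<lambda>i. s * P01 n J u i)"
  by (rule ext) (simp add: P01_def matv_scale algebra_simps)

lemma th_scale: "th n g J l (\<lambda>i. s * u i) = s * th n g J l u"
  by (simp add: th_def omega_def bil_def sum_distrib_left algebra_simps)

lemma lbr_h5E: "lbr 8 de_h5R3 y y' = (\<lambda>k. (- Fh y y') * EE 5 k)"
  by (rule ext) (simp add: lbr_h5 EE_def)

lemma domega_h5: "dform 8 de_h5R3 (omega 8 g J) [a,b,c] = Fh a b * th 8 g J 5 c - Fh a c * th 8 g J 5 b + Fh b c * th 8 g J 5 a"
  unfolding domega Fk_h5 sum18 by simp

lemma Fh_P10_left: "Fh (P10 n J u) w = (Fh u w - \<i> * Fh (matv n J u) w) / 2"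
  by (simp add: P10_def' Fh_def field_simps)
lemma Fh_P01_left: "Fh (P01 n J u) w = (Fh u w + \<i> * Fh (matv n J u) w) / 2"
  by (simp add: P01_def' Fh_def field_simps)

context
  fixes J g :: "nat \<Rightarrow> nat \<Rightarrow> real"
  assumes cs: "cplx_str 8 de_h5R3 J"
begin

lemma F_PP0: "inV 8 c \<Longrightarrow> inV 8 d \<Longrightarrow> Fh (P10 8 J c) (P10 8 J d) = 0"
  unfolding Fh_PP by (simp add: C1[OF cs] C2[OF cs])
lemma F_QQ0: "inV 8 c \<Longrightarrow> inV 8 d \<Longrightarrow> Fh (P01 8 J c) (P01 8 J d) = 0"
  unfolding Fh_QQ by (simp add: C1[OF cs] C2[OF cs])
lemma F_split: "inV 8 c \<Longrightarrow> inV 8 d \<Longrightarrow> Fh c d = Fh (P10 8 J c) (P01 8 J d) + Fh (P01 8 J c) (P10 8 J d)"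
  unfolding Fh_PQ Fh_QP by (simp add: C1[OF cs] field_simps)
lemma inVE5: "inV 8 (EE 5)" by (simp add: inV_def EE_def)
lemma F_PE5: "inV 8 w \<Longrightarrow> Fh (P10 8 J (EE 5)) w = 0"
  unfolding Fh_P10_left by (simp add: C2[OF cs inVE5] Fh_E5)
lemma F_QE5: "inV 8 w \<Longrightarrow> Fh (P01 8 J (EE 5)) w = 0"
  unfolding Fh_P01_left by (simp add: C2[OF cs inVE5] Fh_E5)


lemma dbar_h5:
  assumes c: "inV 8 c" and d: "inV 8 d"
  shows "dbar_omega 8 de_h5R3 J g [lbr 8 de_h5R3 y y', c, d] = - Fh y y' * th 8 g J 5 (P01 8 J (EE 5)) * Fh c d"
proof -
  note iv = inV_P10[OF c] inV_P10[OF d] inV_P01[OF c] inV_P01[OF d]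
  show ?thesis
    unfolding dbar_omega_def typeproj1_3 domega_h5 lbr_h5E P10_scale P01_scale Fh_scale_left th_scale
    by (simp add: F_PE5 F_QE5 iv F_QQ0[OF c d] F_split[OF c d] algebra_simps)
qed

lemma Fh_QP_anti: "Fh (P01 8 J u) (P10 8 J v) = - Fh (P10 8 J v) (P01 8 J u)"
  by (rule Fh_anti)

lemma ddbar_h5:
  assumes x: "inV 8 x0" "inV 8 x1" "inV 8 x2" "inV 8 x3"
  shows "ddbar_omega 8 de_h5R3 J g [x0,x1,x2,x3] =
    2 * th 8 g J 5 (P01 8 J (EE 5)) * (Fh x0 x1 * Fh x2 x3 - Fh x0 x2 * Fh x1 x3 + Fh x0 x3 * Fh x1 x2)"
proof -
  note iv = inV_P10[OF x(1)] inV_P10[OF x(2)] inV_P10[OF x(3)] inV_P10[OF x(4)]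
            inV_P01[OF x(1)] inV_P01[OF x(2)] inV_P01[OF x(3)] inV_P01[OF x(4)]
  note sp = F_split[OF x(1) x(2)] F_split[OF x(1) x(3)] F_split[OF x(1) x(4)]
            F_split[OF x(2) x(3)] F_split[OF x(2) x(4)] F_split[OF x(3) x(4)]
  show ?thesis
    unfolding ddbar_omega_def typeproj2_4 dform4
    by (simp add: dbar_h5 iv F_PP0 F_QQ0 x Fh_QP_anti sp algebra_simps)
qed

end

lemma bil_cpx_P: "Im (bil n g (cpx a) (\<lambda>i. (cpx b i + \<i> * cpx c i) / 2)) = bil n g a c / 2"
  unfolding bil_def cpx_def
  by (simp add: Im_sum sum_divide_distrib)

lemma thQ_Im:
  assumes cs: "cplx_str 8 de J" and cm: "compat_metric 8 J g"
  shows "Im (th 8 g J 5 (P01 8 J (EE 5))) > 0"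
proof -
  define e :: "nat \<Rightarrow> real" where "e = (\<lambda>k. if k = 5 then (1::real) else 0)"
  define u where "u = matv 8 J e"
  have E: "(EE 5 :: nat \<Rightarrow> complex) = cpx e" by (rule ext) (simp add: EE_def cpx_def e_def)
  have "th 8 g J 5 (P01 8 J (EE 5)) = bil 8 g (cpx u) (\<lambda>i. (cpx e i + \<i> * cpx u i) / 2)"
    unfolding th_def omega_def E P01_def' by (simp add: matv_cpx u_def)
  then have Im: "Im (th 8 g J 5 (P01 8 J (EE 5))) = bil 8 g u u / 2" by (simp add: bil_cpx_P)
  have ie: "inV 8 e" by (simp add: inV_def e_def)
  have JJ: "matv 8 J u = (\<lambda>i. - e i)" using cs ie unfolding cplx_str_def u_def by blast
  have "u \<noteq> (\<lambda>_. 0)"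
  proof
    assume "u = (\<lambda>_. 0)"
    then have "matv 8 J u = (\<lambda>_. 0)" by (simp add: matv_def cong: if_cong)
    with JJ have "- e 5 = 0" by (metis)
    then show False by (simp add: e_def)
  qed
  moreover have "inV 8 u" unfolding u_def by (rule inV_matv)
  ultimately have "bil 8 g u u > 0" using cm unfolding compat_metric_def by blast
  with Im show ?thesis by simp
qed

lemma no_SKT_h5: "\<not> (\<exists>J g. SKT 8 de_h5R3 J g)"
proof
  assume "\<exists>J g. SKT 8 de_h5R3 J g"
  then obtain J g where S: "SKT 8 de_h5R3 J g" by blast
  then have cs: "cplx_str 8 de_h5R3 J" and cm: "compat_metric 8 J g"
    and z: "\<And>xs. length xs = 4 \<and> (\<forall>x\<in>set xs. inV 8 x) \<Longrightarrow> ddbar_omega 8 de_h5R3 J g xs = 0"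
    unfolding SKT_def by blast+
  have iv: "inV 8 (EE i :: nat \<Rightarrow> complex)" if "i \<in> {1..8}" for i using that by (simp add: inV_def EE_def)
  have i1: "inV 8 (EE 1 :: nat \<Rightarrow> complex)" and i2: "inV 8 (EE 2 :: nat \<Rightarrow> complex)"
    and i3: "inV 8 (EE 3 :: nat \<Rightarrow> complex)" and i4: "inV 8 (EE 4 :: nat \<Rightarrow> complex)"
    by (simp_all add: iv)
  have "ddbar_omega 8 de_h5R3 J g [EE 1, EE 2, EE 3, EE 4] = 0"
    by (rule z) (simp add: iv)
  moreover have "ddbar_omega 8 de_h5R3 J g [EE 1, EE 2, EE 3, EE 4] = 2 * th 8 g J 5 (P01 8 J (EE 5))"
    by (subst ddbar_h5[OF cs i1 i2 i3 i4]) (simp add: Fh_def EE_def)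
  ultimately have "th 8 g J 5 (P01 8 J (EE 5)) = 0" by simp
  with thQ_Im[OF cs cm] show False by simp
qed

lemma sum18s: "(\<Sum>j::nat=Suc 0..8. f j) = f 1 + f 2 + f 3 + f 4 + f 5 + f 6 + f 7 + (f 8 :: 'a::comm_monoid_add)"
  using sum18[of f] by simp

definition J1h :: "nat \<Rightarrow> nat \<Rightarrow> real" where
 "J1h i j = (if i = 2 \<and> j = 1 then 1 else if i = 1 \<and> j = 2 then -1
   else if i = 4 \<and> j = 3 then -1 else if i = 3 \<and> j = 4 then 1
   else if i = 6 \<and> j = 5 then 1 else if i = 5 \<and> j = 6 then -1
   else if i = 8 \<and> j = 7 then -1 else if i = 7 \<and> j = 8 then 1 else 0)"

definition J2h :: "nat \<Rightarrow> nat \<Rightarrow> real" where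
 "J2h i j = (if i = 3 \<and> j = 1 then 1 else if i = 1 \<and> j = 3 then -1
   else if i = 4 \<and> j = 2 then 1 else if i = 2 \<and> j = 4 then -1
   else if i = 7 \<and> j = 5 then 1 else if i = 5 \<and> j = 7 then -1
   else if i = 8 \<and> j = 6 then 1 else if i = 6 \<and> j = 8 then -1 else 0)"

definition J3h :: "nat \<Rightarrow> nat \<Rightarrow> real" where
 "J3h i j = (if i = 1 \<and> j = 4 then 1 else if i = 2 \<and> j = 3 then -1
   else if i = 3 \<and> j = 2 then 1 else if i = 4 \<and> j = 1 then -1
   else if i = 5 \<and> j = 8 then 1 else if i = 6 \<and> j = 7 then -1
   else if i = 7 \<and> j = 6 then 1 else if i = 8 \<and> j = 5 then -1 else 0)"

definition gI :: "nat \<Rightarrow> nat \<Rightarrow> real" where "gI i j = (if i = j then 1 else 0)"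

lemma matv_J1: "matv 8 J1h x = (\<lambda>i. if i = 1 then - x 2 else if i = 2 then x 1 else if i = 3 then x 4 else if i = 4 then - x 3
   else if i = 5 then - x 6 else if i = 6 then x 5 else if i = 7 then x 8 else if i = 8 then - x 7 else 0)"
  by (rule ext) (simp add: matv_def sum18 sum18s J1h_def)

lemma matv_J2: "matv 8 J2h x = (\<lambda>i. if i = 1 then - x 3 else if i = 2 then - x 4 else if i = 3 then x 1 else if i = 4 then x 2
   else if i = 5 then - x 7 else if i = 6 then - x 8 else if i = 7 then x 5 else if i = 8 then x 6 else 0)"
  by (rule ext) (simp add: matv_def sum18 sum18s J2h_def)

lemma matv_J3: "matv 8 J3h x = (\<lambda>i. if i = 1 then x 4 else if i = 2 then - x 3 else if i = 3 then x 2 else if i = 4 then - x 1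
   else if i = 5 then x 8 else if i = 6 then - x 7 else if i = 7 then x 6 else if i = 8 then - x 5 else 0)"
  by (rule ext) (simp add: matv_def sum18 sum18s J3h_def)

lemma bil_gI: "bil 8 gI x y = x 1 * y 1 + x 2 * y 2 + x 3 * y 3 + x 4 * y 4 + x 5 * y 5 + x 6 * y 6 + x 7 * y 7 + x 8 * y 8"
  unfolding bil_def gI_def by (simp add: sum18 sum18s)

lemma inV8_cases: "inV 8 x \<Longrightarrow> i \<notin> {1,2,3,4,5,6,7,8} \<Longrightarrow> x i = 0"
  by (auto simp: inV_def)

lemma ext8: "inV 8 (x::nat\<Rightarrow>'a::zero) \<Longrightarrow> inV 8 y \<Longrightarrow> (\<And>i. i \<in> {1,2,3,4,5,6,7,8} \<Longrightarrow> x i = y i) \<Longrightarrow> x = y"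
  by (rule ext) (metis inV8_cases)

lemma Fk_neg_left: "Fk n de k (\<lambda>i. - x i) y = - Fk n de k x y"
  by (simp add: Fk_def sum_negf)

lemma Nij_generic:
  assumes J2: "\<forall>x::nat\<Rightarrow>real. inV n x \<longrightarrow> matv n J (matv n J x) = (\<lambda>i. - x i)"
    and inv: "\<And>k (x::nat\<Rightarrow>real) y. inV n x \<Longrightarrow> inV n y \<Longrightarrow> Fk n de k (matv n J x) (matv n J y) = Fk n de k x y"
  shows "cplx_str n de J"
  unfolding cplx_str_def
proof (intro conjI allI impI)
  fix x :: "nat \<Rightarrow> real" assume "inV n x" then show "matv n J (matv n J x) = (\<lambda>i. - x i)" using J2 by blast
next
  fix x y :: "nat \<Rightarrow> real" assume xy: "inV n x \<and> inV n y"
  then have x: "inV n x" and y: "inV n y" by auto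
  have a: "lbr n de (matv n J x) (matv n J y) = lbr n de x y"
    unfolding lbr_Fk using inv[OF x y] by (simp cong: if_cong)
  have f: "Fk n de k (matv n J x) y = - Fk n de k x (matv n J y)" for k
  proof -
    have "Fk n de k (matv n J x) y = Fk n de k (matv n J (matv n J x)) (matv n J y)"
      using inv[OF inV_matv y] by simp
    also have "\<dots> = - Fk n de k x (matv n J y)" using J2 x by (simp add: Fk_neg_left)
    finally show ?thesis .
  qed
  have b: "lbr n de x (matv n J y) = (\<lambda>k. (-1) * lbr n de (matv n J x) y k)"
    unfolding lbr_Fk by (rule ext) (simp add: f)
  show "lbr n de (matv n J x) (matv n J y) - matv n J (lbr n de (matv n J x) y) -
          matv n J (lbr n de x (matv n J y)) - lbr n de x y = (\<lambda>_. 0)"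
    unfolding a b matv_scale by (rule ext) simp
qed

lemma inV_EE: "l \<in> {1..n} \<Longrightarrow> inV n (EE l)" by (simp add: inV_def EE_def)

lemma torsion_formula:
  fixes a b c :: "nat \<Rightarrow> real"
  assumes inv: "\<And>k (x::nat\<Rightarrow>real) y. inV n x \<Longrightarrow> inV n y \<Longrightarrow> Fk n de k (matv n J x) (matv n J y) = Fk n de k x y"
    and comp: "\<And>(x::nat\<Rightarrow>real) y. inV n x \<Longrightarrow> inV n y \<Longrightarrow> bil n g (matv n J x) (matv n J y) = bil n g x y"
    and a: "inV n a" and b: "inV n b" and c: "inV n c"
  shows "Jform n J (dform n de (omega n g J)) [a,b,c] =
    (\<Sum>l=1..n. Fk n de l a b * bil n g (EE l) c - Fk n de l a c * bil n g (EE l) b + Fk n de l b c * bil n g (EE l) a)"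
proof -
  have t: "th n g J l (matv n J w) = bil n g (EE l) w" if "l \<in> {1..n}" "inV n w" for l and w :: "nat \<Rightarrow> real"
    unfolding th_def omega_def using comp[OF inV_EE[where 'a=real, OF that(1)] that(2)] by simp
  show ?thesis
    unfolding Jform_def list.map domega
    by (rule sum.cong[OF refl]) (simp add: inv a b c t)
qed

lemma J2_J1: "\<forall>x::nat\<Rightarrow>real. inV 8 x \<longrightarrow> matv 8 J1h (matv 8 J1h x) = (\<lambda>i. - x i)"
  by (auto simp: matv_J1 inV_def)
lemma J2_J2: "\<forall>x::nat\<Rightarrow>real. inV 8 x \<longrightarrow> matv 8 J2h (matv 8 J2h x) = (\<lambda>i. - x i)"
  by (auto simp: matv_J2 inV_def)
lemma J2_J3: "\<forall>x::nat\<Rightarrow>real. inV 8 x \<longrightarrow> matv 8 J3h (matv 8 J3h x) = (\<lambda>i. - x i)"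
  by (auto simp: matv_J3 inV_def)

lemma comp_J1: "bil 8 gI (matv 8 J1h x) (matv 8 J1h y) = bil 8 gI x y"
  by (simp add: bil_gI matv_J1 algebra_simps)
lemma comp_J2: "bil 8 gI (matv 8 J2h x) (matv 8 J2h y) = bil 8 gI x y"
  by (simp add: bil_gI matv_J2 algebra_simps)
lemma comp_J3: "bil 8 gI (matv 8 J3h x) (matv 8 J3h y) = bil 8 gI x y"
  by (simp add: bil_gI matv_J3 algebra_simps)

lemma bil_gI_sum: "bil 8 gI x x = (\<Sum>i\<in>{1..8}. x i * x i)"
  by (simp only: bil_gI sum18)

lemma gI_pos: "inV 8 x \<Longrightarrow> x \<noteq> (\<lambda>_. 0) \<Longrightarrow> bil 8 gI x (x::nat\<Rightarrow>real) > 0"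
proof -
  assume v: "inV 8 x" and nz: "x \<noteq> (\<lambda>_. 0)"
  then obtain i where i: "x i \<noteq> 0" by auto
  with v have ii: "i \<in> {1..8}" by (auto simp: inV_def)
  show ?thesis unfolding bil_gI_sum
    by (rule sum_pos2[OF _ ii]) (use i in \<open>auto simp: less_le\<close>)
qed

lemma cm_gI:
  assumes "\<And>x y. bil 8 gI (matv 8 J x) (matv 8 J y) = bil 8 gI x (y::nat\<Rightarrow>real)"
  shows "compat_metric 8 J gI"
  unfolding compat_metric_def using assms gI_pos by (auto simp: gI_def)

lemma rel12: "matv 8 J1h (matv 8 J2h x) = matv 8 J3h x"
  by (rule ext) (simp add: matv_J1 matv_J2 matv_J3)
lemma rel21: "matv 8 J2h (matv 8 J1h x) = (\<lambda>i. - matv 8 J3h x i)"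
  by (rule ext) (simp add: matv_J1 matv_J2 matv_J3)

lemma weak_HKT_from:
  assumes inv1: "\<And>k (x::nat\<Rightarrow>real) y. inV 8 x \<Longrightarrow> inV 8 y \<Longrightarrow> Fk 8 de k (matv 8 J1h x) (matv 8 J1h y) = Fk 8 de k x y"
    and inv2: "\<And>k (x::nat\<Rightarrow>real) y. inV 8 x \<Longrightarrow> inV 8 y \<Longrightarrow> Fk 8 de k (matv 8 J2h x) (matv 8 J2h y) = Fk 8 de k x y"
    and inv3: "\<And>k (x::nat\<Rightarrow>real) y. inV 8 x \<Longrightarrow> inV 8 y \<Longrightarrow> Fk 8 de k (matv 8 J3h x) (matv 8 J3h y) = Fk 8 de k x y"
    and wit: "dform 8 de (bismut_torsion 8 de J1h gI) [EE 1, EE 2, EE 3, EE 4] \<noteq> 0"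
  shows "weak_HKT 8 de J1h J2h J3h gI"
proof -
  have hk: "Jform 8 J1h (dform 8 de (omega 8 gI J1h)) xs = Jform 8 J2h (dform 8 de (omega 8 gI J2h)) xs \<and>
        Jform 8 J2h (dform 8 de (omega 8 gI J2h)) xs = Jform 8 J3h (dform 8 de (omega 8 gI J3h)) xs"
    if "length xs = 3 \<and> (\<forall>x\<in>set xs. inV 8 x)" for xs :: "(nat \<Rightarrow> real) list"
  proof -
    from that obtain a b c where xs: "xs = [a,b,c]" by (auto simp: numeral_3_eq_3 length_Suc_conv)
    with that have abc: "inV 8 a" "inV 8 b" "inV 8 c" by auto
    show ?thesis unfolding xs
      using torsion_formula[OF inv1 comp_J1 abc] torsion_formula[OF inv2 comp_J2 abc] torsion_formula[OF inv3 comp_J3 abc]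
      by simp
  qed
  have wx: "length [EE 1, EE 2, EE 3, EE 4] = 4 \<and> (\<forall>x\<in>set [EE 1, EE 2, EE 3, EE (4::nat)]. inV 8 (x::nat\<Rightarrow>real))"
    by (simp add: inV_EE)
  show ?thesis
    unfolding weak_HKT_def HKT_def
    using Nij_generic[OF J2_J1 inv1] Nij_generic[OF J2_J2 inv2] Nij_generic[OF J2_J3 inv3]
      rel12 rel21 cm_gI[OF comp_J1] cm_gI[OF comp_J2] cm_gI[OF comp_J3] hk wx wit
    by blast
qed

definition G5 :: "(nat \<Rightarrow> 'a::real_field) \<Rightarrow> (nat \<Rightarrow> 'a) \<Rightarrow> 'a" where
  "G5 x y = x 1 * y 3 - x 3 * y 1 - x 2 * y 4 + x 4 * y 2"
definition G6 :: "(nat \<Rightarrow> 'a::real_field) \<Rightarrow> (nat \<Rightarrow> 'a) \<Rightarrow> 'a" where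
  "G6 x y = x 1 * y 4 - x 4 * y 1 + x 2 * y 3 - x 3 * y 2"

lemma Fk_h3: "Fk 8 de_h3CR2 l x y = (if l = 5 then G5 x y else if l = 6 then G6 x y else 0)"
  unfolding Fk_def de_h3CR2_def wedge2_def G5_def G6_def set18
  by (simp add: algebra_simps)

lemma Fk_h7: "Fk 8 de_h7QR l x y = (if l = 5 then Fh x y else if l = 6 then G5 x y else if l = 7 then G6 x y else 0)"
  unfolding Fk_def de_h7QR_def wedge2_def Fh_def G5_def G6_def set18
  by (simp add: algebra_simps)

lemma inv_h5_1: "Fk 8 de_h5R3 k (matv 8 J1h x) (matv 8 J1h y) = Fk 8 de_h5R3 k x y"
  by (simp add: Fk_h5 Fh_def matv_J1 algebra_simps)
lemma inv_h5_2: "Fk 8 de_h5R3 k (matv 8 J2h x) (matv 8 J2h y) = Fk 8 de_h5R3 k x y"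
  by (simp add: Fk_h5 Fh_def matv_J2 algebra_simps)
lemma inv_h5_3: "Fk 8 de_h5R3 k (matv 8 J3h x) (matv 8 J3h y) = Fk 8 de_h5R3 k x y"
  by (simp add: Fk_h5 Fh_def matv_J3 algebra_simps)
lemma inv_h3_1: "Fk 8 de_h3CR2 k (matv 8 J1h x) (matv 8 J1h y) = Fk 8 de_h3CR2 k x y"
  by (simp add: Fk_h3 G5_def G6_def matv_J1 algebra_simps)
lemma inv_h3_2: "Fk 8 de_h3CR2 k (matv 8 J2h x) (matv 8 J2h y) = Fk 8 de_h3CR2 k x y"
  by (simp add: Fk_h3 G5_def G6_def matv_J2 algebra_simps)
lemma inv_h3_3: "Fk 8 de_h3CR2 k (matv 8 J3h x) (matv 8 J3h y) = Fk 8 de_h3CR2 k x y"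
  by (simp add: Fk_h3 G5_def G6_def matv_J3 algebra_simps)
lemma inv_h7_1: "Fk 8 de_h7QR k (matv 8 J1h x) (matv 8 J1h y) = Fk 8 de_h7QR k x y"
  by (simp add: Fk_h7 Fh_def G5_def G6_def matv_J1 algebra_simps)
lemma inv_h7_2: "Fk 8 de_h7QR k (matv 8 J2h x) (matv 8 J2h y) = Fk 8 de_h7QR k x y"
  by (simp add: Fk_h7 Fh_def G5_def G6_def matv_J2 algebra_simps)
lemma inv_h7_3: "Fk 8 de_h7QR k (matv 8 J3h x) (matv 8 J3h y) = Fk 8 de_h7QR k x y"
  by (simp add: Fk_h7 Fh_def G5_def G6_def matv_J3 algebra_simps)

lemma wit_h5: "dform 8 de_h5R3 (bismut_torsion 8 de_h5R3 J1h gI) [EE 1, EE 2, EE 3, EE 4] \<noteq> 0"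
proof -
  have tf: "bismut_torsion 8 de_h5R3 J1h gI [a,b,c] = (\<Sum>l=1..8. Fk 8 de_h5R3 l a b * bil 8 gI (EE l) c - Fk 8 de_h5R3 l a c * bil 8 gI (EE l) b + Fk 8 de_h5R3 l b c * bil 8 gI (EE l) a)"
    if "inV 8 a" "inV 8 b" "inV 8 c" for a b c :: "nat \<Rightarrow> real"
    unfolding bismut_torsion_def by (rule torsion_formula[OF inv_h5_1 comp_J1 that])
  show ?thesis unfolding dform4
    apply (simp add: tf inV_lbr inV_EE)
    by (simp add: sum18 sum18s lbr_Fk Fk_h5 Fh_def EE_def bil_gI)
qed

lemma wit_h3: "dform 8 de_h3CR2 (bismut_torsion 8 de_h3CR2 J1h gI) [EE 1, EE 2, EE 3, EE 4] \<noteq> 0"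
proof -
  have tf: "bismut_torsion 8 de_h3CR2 J1h gI [a,b,c] = (\<Sum>l=1..8. Fk 8 de_h3CR2 l a b * bil 8 gI (EE l) c - Fk 8 de_h3CR2 l a c * bil 8 gI (EE l) b + Fk 8 de_h3CR2 l b c * bil 8 gI (EE l) a)"
    if "inV 8 a" "inV 8 b" "inV 8 c" for a b c :: "nat \<Rightarrow> real"
    unfolding bismut_torsion_def by (rule torsion_formula[OF inv_h3_1 comp_J1 that])
  show ?thesis unfolding dform4
    apply (simp add: tf inV_lbr inV_EE)
    by (simp add: sum18 sum18s lbr_Fk Fk_h3 G5_def G6_def EE_def bil_gI)
qed

lemma wit_h7: "dform 8 de_h7QR (bismut_torsion 8 de_h7QR J1h gI) [EE 1, EE 2, EE 3, EE 4] \<noteq> 0"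
proof -
  have tf: "bismut_torsion 8 de_h7QR J1h gI [a,b,c] = (\<Sum>l=1..8. Fk 8 de_h7QR l a b * bil 8 gI (EE l) c - Fk 8 de_h7QR l a c * bil 8 gI (EE l) b + Fk 8 de_h7QR l b c * bil 8 gI (EE l) a)"
    if "inV 8 a" "inV 8 b" "inV 8 c" for a b c :: "nat \<Rightarrow> real"
    unfolding bismut_torsion_def by (rule torsion_formula[OF inv_h7_1 comp_J1 that])
  show ?thesis unfolding dform4
    apply (simp add: tf inV_lbr inV_EE)
    by (simp add: sum18 sum18s lbr_Fk Fk_h7 Fh_def G5_def G6_def EE_def bil_gI)
qed

lemma HKT_h5: "weak_HKT 8 de_h5R3 J1h J2h J3h gI"
  by (rule weak_HKT_from[OF inv_h5_1 inv_h5_2 inv_h5_3 wit_h5])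
lemma HKT_h3: "weak_HKT 8 de_h3CR2 J1h J2h J3h gI"
  by (rule weak_HKT_from[OF inv_h3_1 inv_h3_2 inv_h3_3 wit_h3])
lemma HKT_h7: "weak_HKT 8 de_h7QR J1h J2h J3h gI"
  by (rule weak_HKT_from[OF inv_h7_1 inv_h7_2 inv_h7_3 wit_h7])

definition J7 :: "nat \<Rightarrow> nat \<Rightarrow> real" where
 "J7 i j = (if i = 2 \<and> j = 1 then 1 else if i = 1 \<and> j = 2 then -1
   else if i = 4 \<and> j = 3 then 1 else if i = 3 \<and> j = 4 then -1
   else if i = 7 \<and> j = 6 then 1 else if i = 6 \<and> j = 7 then -1
   else if i = 8 \<and> j = 5 then 1 else if i = 5 \<and> j = 8 then -1 else 0)"

definition g7 :: "nat \<Rightarrow> nat \<Rightarrow> real" where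
 "g7 i j = (if i = j then (if i = 5 \<or> i = 8 then 2 else 1) else 0)"

lemma matv_J7: "matv 8 J7 x = (\<lambda>i. if i = 1 then - x 2 else if i = 2 then x 1 else if i = 3 then - x 4 else if i = 4 then x 3
   else if i = 5 then - x 8 else if i = 6 then - x 7 else if i = 7 then x 6 else if i = 8 then x 5 else 0)"
  by (rule ext) (simp add: matv_def sum18 sum18s J7_def)

lemma bil_g7: "bil 8 g7 x y = x 1 * y 1 + x 2 * y 2 + x 3 * y 3 + x 4 * y 4 + 2 * (x 5 * y 5) + x 6 * y 6 + x 7 * y 7 + 2 * (x 8 * y 8)"
  unfolding bil_def g7_def by (simp add: sum18 sum18s)

lemma lbr_h7: "lbr 8 de_h7QR x y = (\<lambda>k. if k = 5 then - Fh x y else if k = 6 then - G5 x y else if k = 7 then - G6 x y else 0)"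
  by (rule ext) (simp add: lbr_Fk Fk_h7)

definition W :: "(nat \<Rightarrow> complex) \<Rightarrow> (nat \<Rightarrow> complex) \<Rightarrow> complex" where
  "W u v = (u 1 + \<i> * u 2) * (v 3 + \<i> * v 4) - (u 3 + \<i> * u 4) * (v 1 + \<i> * v 2)"
definition Wb :: "(nat \<Rightarrow> complex) \<Rightarrow> (nat \<Rightarrow> complex) \<Rightarrow> complex" where
  "Wb u v = (u 1 - \<i> * u 2) * (v 3 - \<i> * v 4) - (u 3 - \<i> * u 4) * (v 1 - \<i> * v 2)"

lemma th7: "th 8 g7 J7 5 v = 2 * v 8" "th 8 g7 J7 6 v = v 7" "th 8 g7 J7 7 v = - v 6"
  by (simp_all add: th_def omega_def bil_g7 matv_J7 EE_def)

lemma L1_h7: "dbar_omega 8 de_h7QR J7 g7 [lbr 8 de_h7QR y y', c, d] = (\<i>/2) * W y y' * Wb c d - \<i> * Fh y y' * Fh c d"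
  unfolding dbar_omega_def typeproj1_3 domega sum18 Fk_h7
  by (simp add: th7 lbr_h7 P10_def' P01_def' matv_J7 Fh_def G5_def G6_def W_def Wb_def field_simps)


definition a1 :: "(nat \<Rightarrow> complex) \<Rightarrow> complex" where "a1 u = u 1 + \<i> * u 2"
definition a2 :: "(nat \<Rightarrow> complex) \<Rightarrow> complex" where "a2 u = u 3 + \<i> * u 4"
definition b1 :: "(nat \<Rightarrow> complex) \<Rightarrow> complex" where "b1 u = u 1 - \<i> * u 2"
definition b2 :: "(nat \<Rightarrow> complex) \<Rightarrow> complex" where "b2 u = u 3 - \<i> * u 4"

lemma W_PP: "W (P10 8 J7 u) (P10 8 J7 v) = W u v"
  by (simp add: W_def P10_def' matv_J7 field_simps)
lemma W_Q1: "W (P01 8 J7 u) v = 0"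
  by (simp add: W_def P01_def' matv_J7 field_simps)
lemma W_Q2: "W u (P01 8 J7 v) = 0"
  by (simp add: W_def P01_def' matv_J7 field_simps)
lemma Wb_QQ: "Wb (P01 8 J7 u) (P01 8 J7 v) = Wb u v"
  by (simp add: Wb_def P01_def' matv_J7 field_simps)
lemma Wb_P1: "Wb (P10 8 J7 u) v = 0"
  by (simp add: Wb_def P10_def' matv_J7 field_simps)
lemma Wb_P2: "Wb u (P10 8 J7 v) = 0"
  by (simp add: Wb_def P10_def' matv_J7 field_simps)
lemma Fh_PP7: "Fh (P10 8 J7 u) (P10 8 J7 v) = 0"
  by (simp add: Fh_def P10_def' matv_J7 field_simps)
lemma Fh_QQ7: "Fh (P01 8 J7 u) (P01 8 J7 v) = 0"
  by (simp add: Fh_def P01_def' matv_J7 field_simps)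
lemma Fh_PQ7: "Fh (P10 8 J7 u) (P01 8 J7 v) = (\<i>/2) * (a1 u * b1 v + a2 u * b2 v)"
  by (simp add: Fh_def P10_def' P01_def' matv_J7 a1_def a2_def b1_def b2_def field_simps)
lemma Fh_QP7: "Fh (P01 8 J7 u) (P10 8 J7 v) = - (\<i>/2) * (a1 v * b1 u + a2 v * b2 u)"
  by (simp add: Fh_def P10_def' P01_def' matv_J7 a1_def a2_def b1_def b2_def field_simps)
lemma W_at: "W u v = a1 u * a2 v - a2 u * a1 v" by (simp add: W_def a1_def a2_def)
lemma Wb_at: "Wb u v = b1 u * b2 v - b2 u * b1 v" by (simp add: Wb_def b1_def b2_def)

lemma ddbar_h7: "ddbar_omega 8 de_h7QR J7 g7 [x0,x1,x2,x3] = 0"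
  unfolding ddbar_omega_def typeproj2_4 dform4 L1_h7
  apply (simp only: W_PP W_Q1 W_Q2 Wb_QQ Wb_P1 Wb_P2 Fh_PP7 Fh_QQ7 Fh_PQ7 Fh_QP7 mult_zero_left mult_zero_right)
  by (simp add: W_at Wb_at field_simps)


lemma cplx_J7: "cplx_str 8 de_h7QR J7"
  unfolding cplx_str_def
proof (intro conjI allI impI)
  fix x :: "nat \<Rightarrow> real" assume "inV 8 x"
  then show "matv 8 J7 (matv 8 J7 x) = (\<lambda>i. - x i)" by (auto simp: matv_J7 inV_def)
next
  fix x y :: "nat \<Rightarrow> real"
  show "lbr 8 de_h7QR (matv 8 J7 x) (matv 8 J7 y) - matv 8 J7 (lbr 8 de_h7QR (matv 8 J7 x) y) -
        matv 8 J7 (lbr 8 de_h7QR x (matv 8 J7 y)) - lbr 8 de_h7QR x y = (\<lambda>_. 0)"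
    by (rule ext) (simp add: lbr_h7 matv_J7 Fh_def G5_def G6_def algebra_simps)
qed

lemma bil_g7_sum: "bil 8 g7 x x = (\<Sum>i\<in>{1..8}. (if i = 5 \<or> i = 8 then 2 else 1) * (x i * (x i::real)))"
  unfolding bil_g7 sum18 by simp

lemma cm_g7: "compat_metric 8 J7 g7"
  unfolding compat_metric_def
proof (intro conjI allI impI ballI)
  fix i j :: nat show "g7 i j = g7 j i" by (simp add: g7_def)
next
  fix x :: "nat \<Rightarrow> real" assume a: "inV 8 x \<and> x \<noteq> (\<lambda>_. 0)"
  then obtain i where i: "x i \<noteq> 0" by auto
  with a have ii: "i \<in> {1..8}" by (auto simp: inV_def)
  show "bil 8 g7 x x > 0" unfolding bil_g7_sum
    by (rule sum_pos2[OF _ ii]) (use i in \<open>auto simp: less_le\<close>)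
next
  fix x y :: "nat \<Rightarrow> real"
  show "bil 8 g7 (matv 8 J7 x) (matv 8 J7 y) = bil 8 g7 x y"
    by (simp add: bil_g7 matv_J7 algebra_simps)
qed

lemma SKT_h7: "SKT 8 de_h7QR J7 g7"
proof -
  have "ddbar_omega 8 de_h7QR J7 g7 xs = 0" if "length xs = 4" for xs
  proof -
    from that obtain x0 x1 x2 x3 where "xs = [x0,x1,x2,x3]"
      by (auto simp: eval_nat_numeral length_Suc_conv)
    then show ?thesis by (simp add: ddbar_h7)
  qed
  then show ?thesis unfolding SKT_def using cplx_J7 cm_g7 by blast
qed

definition J3c :: "nat \<Rightarrow> nat \<Rightarrow> real" where
 "J3c i j = (if i = 1 then (if j = 3 then -1 else 0)
   else if i = 2 then (if j = 1 then 3/2 else if j = 2 then 1 else if j = 3 then -1/2 else if j = 4 then 2 else 0)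
   else if i = 3 then (if j = 1 then 1 else 0)
   else if i = 4 then (if j = 1 then -1/2 else if j = 2 then -1 else if j = 3 then 1 else if j = 4 then -1 else 0)
   else if i = 5 then (if j = 6 then -1/2 else 0)
   else if i = 6 then (if j = 5 then 2 else 0)
   else if i = 7 then (if j = 8 then -1 else 0)
   else if i = 8 then (if j = 7 then 1 else 0) else 0)"

definition g3 :: "nat \<Rightarrow> nat \<Rightarrow> real" where
 "g3 i j = (if i = 1 then (if j = 1 then 9/2 else if j = 2 then 2 else if j = 3 then -5/4 else if j = 4 then 7/2 else 0)
   else if i = 2 then (if j = 1 then 2 else if j = 2 then 3 else if j = 3 then -3/2 else if j = 4 then 3 else 0)
   else if i = 3 then (if j = 1 then -5/4 else if j = 2 then -3/2 else if j = 3 then 13/4 else if j = 4 then -2 else 0)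
   else if i = 4 then (if j = 1 then 7/2 else if j = 2 then 3 else if j = 3 then -2 else if j = 4 then 6 else 0)
   else if i = 5 then (if j = 5 then 4 else 0)
   else if i = j \<and> 6 \<le> i \<and> i \<le> 8 then 1 else 0)"

lemma matv_J3c: "matv 8 J3c x = (\<lambda>i. if i = 1 then - x 3
   else if i = 2 then 3/2 * x 1 + x 2 - 1/2 * x 3 + 2 * x 4
   else if i = 3 then x 1
   else if i = 4 then - 1/2 * x 1 - x 2 + x 3 - x 4
   else if i = 5 then - 1/2 * x 6 else if i = 6 then 2 * x 5 else if i = 7 then - x 8 else if i = 8 then x 7 else 0)"
  by (rule ext) (simp add: matv_def sum18 sum18s J3c_def)

lemma bil_g3: "bil 8 g3 x y =
   9/2 * (x 1 * y 1) + 2 * (x 1 * y 2) - 5/4 * (x 1 * y 3) + 7/2 * (x 1 * y 4)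
 + 2 * (x 2 * y 1) + 3 * (x 2 * y 2) - 3/2 * (x 2 * y 3) + 3 * (x 2 * y 4)
 - 5/4 * (x 3 * y 1) - 3/2 * (x 3 * y 2) + 13/4 * (x 3 * y 3) - 2 * (x 3 * y 4)
 + 7/2 * (x 4 * y 1) + 3 * (x 4 * y 2) - 2 * (x 4 * y 3) + 6 * (x 4 * y 4)
 + 4 * (x 5 * y 5) + x 6 * y 6 + x 7 * y 7 + x 8 * y 8"
  unfolding bil_def g3_def by (simp add: sum18 sum18s algebra_simps)

lemma lbr_h3: "lbr 8 de_h3CR2 x y = (\<lambda>k. if k = 5 then - G5 x y else if k = 6 then - G6 x y else 0)"
  by (rule ext) (simp add: lbr_Fk Fk_h3)

definition p1 :: "(nat \<Rightarrow> complex) \<Rightarrow> complex" where "p1 u = - \<i> * u 1 + u 3"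
definition p2 :: "(nat \<Rightarrow> complex) \<Rightarrow> complex" where "p2 u = (3 - \<i>) * u 1 + (2 + 2*\<i>) * u 2 + 4 * u 4"
definition q1 :: "(nat \<Rightarrow> complex) \<Rightarrow> complex" where "q1 u = \<i> * u 1 + u 3"
definition q2 :: "(nat \<Rightarrow> complex) \<Rightarrow> complex" where "q2 u = (3 + \<i>) * u 1 + (2 - 2*\<i>) * u 2 + 4 * u 4"

lemma at_P: "p1 (P10 8 J3c u) = p1 u" "p2 (P10 8 J3c u) = p2 u" "q1 (P10 8 J3c u) = 0" "q2 (P10 8 J3c u) = 0"
  by (simp_all add: p1_def p2_def q1_def q2_def P10_def' matv_J3c field_simps)
lemma at_Q: "p1 (P01 8 J3c u) = 0" "p2 (P01 8 J3c u) = 0" "q1 (P01 8 J3c u) = q1 u" "q2 (P01 8 J3c u) = q2 u"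
  by (simp_all add: p1_def p2_def q1_def q2_def P01_def' matv_J3c field_simps)

definition Gam :: "(nat \<Rightarrow> complex) \<Rightarrow> (nat \<Rightarrow> complex) \<Rightarrow> complex" where "Gam u v = G5 u v + (\<i>/2) * G6 u v"
definition Gamb :: "(nat \<Rightarrow> complex) \<Rightarrow> (nat \<Rightarrow> complex) \<Rightarrow> complex" where "Gamb u v = G5 u v - (\<i>/2) * G6 u v"

lemmas atdefs = p1_def p2_def q1_def q2_def Gam_def Gamb_def G5_def G6_def P10_def' P01_def' matv_J3c

lemma Gam_PP: "Gam (P10 8 J3c u) (P10 8 J3c v) = (-3/16 - \<i>/16) * (p1 u * p2 v - p2 u * p1 v)"
  by (simp add: atdefs field_simps)
lemma Gam_PQ: "Gam (P10 8 J3c u) (P01 8 J3c v) = (-1/8 + \<i>/2) * (p1 u * q1 v) + 1/8 * (p1 u * q2 v) + (-1/16 - \<i>/16) * (p2 u * q1 v) + (\<i>/16) * (p2 u * q2 v)"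
  by (simp add: atdefs field_simps)
lemma Gam_QP: "Gam (P01 8 J3c u) (P10 8 J3c v) = - ((-1/8 + \<i>/2) * (p1 v * q1 u) + 1/8 * (p1 v * q2 u) + (-1/16 - \<i>/16) * (p2 v * q1 u) + (\<i>/16) * (p2 v * q2 u))"
  by (simp add: atdefs field_simps)
lemma Gam_QQ: "Gam (P01 8 J3c u) (P01 8 J3c v) = 0"
  by (simp add: atdefs field_simps)
lemma Gamb_PP: "Gamb (P10 8 J3c u) (P10 8 J3c v) = 0"
  by (simp add: atdefs field_simps)
lemma Gamb_PQ: "Gamb (P10 8 J3c u) (P01 8 J3c v) = (1/8 + \<i>/2) * (p1 u * q1 v) + (1/16 - \<i>/16) * (p1 u * q2 v) + (-1/8) * (p2 u * q1 v) + (\<i>/16) * (p2 u * q2 v)"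
  by (simp add: atdefs field_simps)
lemma Gamb_QP: "Gamb (P01 8 J3c u) (P10 8 J3c v) = - ((1/8 + \<i>/2) * (p1 v * q1 u) + (1/16 - \<i>/16) * (p1 v * q2 u) + (-1/8) * (p2 v * q1 u) + (\<i>/16) * (p2 v * q2 u))"
  by (simp add: atdefs field_simps)
lemma Gamb_QQ: "Gamb (P01 8 J3c u) (P01 8 J3c v) = (-3/16 + \<i>/16) * (q1 u * q2 v - q2 u * q1 v)"
  by (simp add: atdefs field_simps)


lemma G5_Pz: "G5 (P10 8 J3c (lbr 8 de_h3CR2 y y')) w = 0" "G6 (P10 8 J3c (lbr 8 de_h3CR2 y y')) w = 0"
  "G5 (P01 8 J3c (lbr 8 de_h3CR2 y y')) w = 0" "G6 (P01 8 J3c (lbr 8 de_h3CR2 y y')) w = 0"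
  by (simp_all add: G5_def G6_def P10_def' P01_def' matv_J3c lbr_h3)

lemma th3: "th 8 g3 J3c 5 v = 2 * v 6" "th 8 g3 J3c 6 v = -2 * v 5"
  by (simp_all add: th_def omega_def bil_g3 matv_J3c EE_def)

lemma thz: "th 8 g3 J3c 5 (P10 8 J3c (lbr 8 de_h3CR2 y y')) = 2 * \<i> * Gam y y'"
  "th 8 g3 J3c 6 (P10 8 J3c (lbr 8 de_h3CR2 y y')) = Gam y y'"
  "th 8 g3 J3c 5 (P01 8 J3c (lbr 8 de_h3CR2 y y')) = - 2 * \<i> * Gamb y y'"
  "th 8 g3 J3c 6 (P01 8 J3c (lbr 8 de_h3CR2 y y')) = Gamb y y'"
  by (simp_all add: th3 P10_def' P01_def' matv_J3c lbr_h3 Gam_def Gamb_def field_simps)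

lemma L1_h3: "dbar_omega 8 de_h3CR2 J3c g3 [lbr 8 de_h3CR2 y y', c, d] =
  2 * \<i> * (Gam y y' * Gamb (P01 8 J3c c) (P01 8 J3c d) - Gamb y y' * (Gam (P10 8 J3c c) (P01 8 J3c d) + Gam (P01 8 J3c c) (P10 8 J3c d)))"
  unfolding dbar_omega_def typeproj1_3 domega sum18 Fk_h3
  by (simp add: G5_Pz thz Gam_def Gamb_def field_simps)

lemma ddbar_h3: "ddbar_omega 8 de_h3CR2 J3c g3 [x0,x1,x2,x3] = 0"
  unfolding ddbar_omega_def typeproj2_4 dform4 L1_h3
  apply (simp only: Gam_PP Gam_PQ Gam_QP Gam_QQ Gamb_PP Gamb_PQ Gamb_QP Gamb_QQ at_P at_Q mult_zero_left mult_zero_right)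
  by (simp add: field_simps)


lemma cplx_J3c: "cplx_str 8 de_h3CR2 J3c"
  unfolding cplx_str_def
proof (intro conjI allI impI)
  fix x :: "nat \<Rightarrow> real" assume "inV 8 x"
  then show "matv 8 J3c (matv 8 J3c x) = (\<lambda>i. - x i)" by (auto simp: matv_J3c inV_def field_simps)
next
  fix x y :: "nat \<Rightarrow> real"
  show "lbr 8 de_h3CR2 (matv 8 J3c x) (matv 8 J3c y) - matv 8 J3c (lbr 8 de_h3CR2 (matv 8 J3c x) y) -
        matv 8 J3c (lbr 8 de_h3CR2 x (matv 8 J3c y)) - lbr 8 de_h3CR2 x y = (\<lambda>_. 0)"
    by (rule ext) (simp add: lbr_h3 matv_J3c G5_def G6_def field_simps)
qed

lemma bil_g3_sq: "bil 8 g3 x x = (\<Sum>i\<in>{1..8}. (if i = 5 then 4 else 1) * (x i * (x i::real)))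
   + ((x 3)\<^sup>2 + (3/2 * x 1 + x 2 - 1/2 * x 3 + 2 * x 4)\<^sup>2 + (x 1)\<^sup>2 + (- 1/2 * x 1 - x 2 + x 3 - x 4)\<^sup>2)"
  unfolding bil_g3 sum18 by (simp add: power2_eq_square field_simps)

lemma cm_g3: "compat_metric 8 J3c g3"
  unfolding compat_metric_def
proof (intro conjI allI impI ballI)
  fix i j :: nat show "g3 i j = g3 j i" by (simp add: g3_def)
next
  fix x :: "nat \<Rightarrow> real" assume a: "inV 8 x \<and> x \<noteq> (\<lambda>_. 0)"
  then obtain i where i: "x i \<noteq> 0" by auto
  with a have ii: "i \<in> {1..8}" by (auto simp: inV_def)
  have "(\<Sum>i\<in>{1..8}. (if i = 5 then 4 else 1) * (x i * (x i::real))) > 0"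
    by (rule sum_pos2[OF _ ii]) (use i in \<open>auto simp: less_le\<close>)
  then show "bil 8 g3 x x > 0" unfolding bil_g3_sq
    by (simp add: add_pos_nonneg)
next
  fix x y :: "nat \<Rightarrow> real"
  show "bil 8 g3 (matv 8 J3c x) (matv 8 J3c y) = bil 8 g3 x y"
    by (simp add: bil_g3 matv_J3c field_simps)
qed

lemma SKT_h3: "SKT 8 de_h3CR2 J3c g3"
proof -
  have "ddbar_omega 8 de_h3CR2 J3c g3 xs = 0" if "length xs = 4" for xs
  proof -
    from that obtain x0 x1 x2 x3 where "xs = [x0,x1,x2,x3]"
      by (auto simp: eval_nat_numeral length_Suc_conv)
    then show ?thesis by (simp add: ddbar_h3)
  qed
  then show ?thesis unfolding SKT_def using cplx_J3c cm_g3 by blast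
qed

theorem corollary4p3:
  shows "(\<exists>J1 J2 J3 g. weak_HKT 8 de_h5R3 J1 J2 J3 g) \<and> \<not> (\<exists>J g. SKT 8 de_h5R3 J g) \<and>
         (\<exists>J g. SKT 8 de_h3CR2 J g) \<and> (\<exists>J1 J2 J3 g. weak_HKT 8 de_h3CR2 J1 J2 J3 g) \<and>
         (\<exists>J g. SKT 8 de_h7QR J g) \<and> (\<exists>J1 J2 J3 g. weak_HKT 8 de_h7QR J1 J2 J3 g)"
  proof (intro conjI)
  show "\<exists>J1 J2 J3 g. weak_HKT 8 de_h5R3 J1 J2 J3 g" using HKT_h5 by blast
  show "\<not> (\<exists>J g. SKT 8 de_h5R3 J g)" by (rule no_SKT_h5)
  show "\<exists>J g. SKT 8 de_h3CR2 J g" using SKT_h3 by blast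
  show "\<exists>J1 J2 J3 g. weak_HKT 8 de_h3CR2 J1 J2 J3 g" using HKT_h3 by blast
  show "\<exists>J g. SKT 8 de_h7QR J g" using SKT_h7 by blast
  show "\<exists>J1 J2 J3 g. weak_HKT 8 de_h7QR J1 J2 J3 g" using HKT_h7 by blast
qed

end
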